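(* The elements $\{xC_ny\}_{n\in\mathbb N}$ (free products) mutually commute with respect to the $q$-shuffle product $\star$.
   Context: $\mathbb F$ is a field of characteristic zero and $q\in\mathbb F$ is nonzero and not a root of unity; $[n]_q=(q^n-q^{-n})/(q-q^{-1})$. $\mathbb V$ is the free algebra on noncommuting letters $x,y$; a word is a product of letters (the empty word is $1$), and words form a basis. The $q$-shuffle product $\star$ on $\mathbb V$ is the bilinear product with $1\star v=v\star 1=v$ and, for nontrivial words $u=u_1\cdots u_r$, $v=v_1\cdots v_s$ (letters $u_i,v_j$), $u\star v=u_1\bigl((u_2\cdots u_r)\star v\bigr)+v_1\bigl(u\star(v_2\cdots v_s)\bigr)q^{(u_1,v_1)+(u_2,v_1)+\cdots+(u_r,v_1)}$, where juxtaposition is concatenation and $(x,x)=(y,y)=2$, $(x,y)=(y,x)=-2$. Set $\overline x=1$, $\overline y=-1$. A word $u_1\cdots u_n$ is Catalan if $\overline u_1+\cdots+\overline u_i\ge0$ for $1\le i\le n-1$ and $=0$ for $i=n$. For $n\in\mathbb N$, $C_n=\sum u_1u_2\cdots u_{2n}\,[1]_q[1+\overline u_1]_q[1+\overline u_1+\overline u_2]_q\cdots[1+\overline u_1+\cdots+\overline u_{2n}]_q$, summed over all Catalan words of length $2n$ (so $C_0=1$). *)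

theory Defs
  imports Main
begin

text \<open>An element of the free algebra V
over a field 'a is represented by its coefficient function (word to 'a); all elements
considered below are finitely supported.\<close>

datatype letter = X | Y

type_synonym word = "letter list"

definition qint :: "'a::field \<Rightarrow> int \<Rightarrow> 'a" where
  "qint q n = (q powi n - q powi (- n)) / (q - inverse q)"

fun lpair :: "letter \<Rightarrow> letter \<Rightarrow> int" where
  "lpair X X = 2" | "lpair Y Y = 2" | "lpair X Y = -2" | "lpair Y X = -2"

fun lbar :: "letter \<Rightarrow> int" where
  "lbar X = 1" | "lbar Y = -1"

definition barsum :: "word \<Rightarrow> int" where
  "barsum w = (\<Sum>c\<leftarrow>w. lbar c)"

definition lprefix :: "letter \<Rightarrow> (word \<Rightarrow> 'a::zero) \<Rightarrow> word \<Rightarrow> 'a" where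
  "lprefix a f w = (case w of [] \<Rightarrow> 0 | b # w' \<Rightarrow> (if b = a then f w' else 0))"

definition basis :: "word \<Rightarrow> word \<Rightarrow> 'a::{zero,one}" where
  "basis v w = (if w = v then 1 else 0)"

fun qsh :: "'a::field \<Rightarrow> word \<Rightarrow> word \<Rightarrow> word \<Rightarrow> 'a" where
  "qsh q [] v = basis v"
| "qsh q (a # u) [] = basis (a # u)"
| "qsh q (a # u) (b # v) =
     (\<lambda>w. lprefix a (qsh q u (b # v)) w
          + q powi (\<Sum>c\<leftarrow>a # u. lpair c b) * lprefix b (qsh q (a # u) v) w)"

definition qshuffle :: "'a::field \<Rightarrow> (word \<Rightarrow> 'a) \<Rightarrow> (word \<Rightarrow> 'a) \<Rightarrow> word \<Rightarrow> 'a" where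
  "qshuffle q f g w = (\<Sum>u\<in>{u. f u \<noteq> 0}. \<Sum>v\<in>{v. g v \<noteq> 0}. f u * g v * qsh q u v w)"

definition catalan :: "word \<Rightarrow> bool" where
  "catalan w \<longleftrightarrow> (\<forall>i. 1 \<le> i \<and> i < length w \<longrightarrow> barsum (take i w) \<ge> 0) \<and> barsum w = 0"

definition Cn :: "'a::field \<Rightarrow> nat \<Rightarrow> word \<Rightarrow> 'a" where
  "Cn q n w = (if catalan w \<and> length w = 2 * n
      then (\<Prod>i\<in>{0..2*n}. qint q (1 + barsum (take i w))) else 0)"

definition xCy :: "'a::field \<Rightarrow> nat \<Rightarrow> word \<Rightarrow> 'a" where
  "xCy q n w = (if 2 \<le> length w \<and> hd w = X \<and> last w = Y then Cn q n (butlast (tl w)) else 0)"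

end

theory Submission
  imports Defs
begin


definition psum :: "word \<Rightarrow> letter \<Rightarrow> int" where
  "psum u c = (\<Sum>d\<leftarrow>u. lpair d c)"

fun shp :: "'a::field \<Rightarrow> (word \<Rightarrow> 'a) \<Rightarrow> (word \<Rightarrow> 'a) \<Rightarrow> word \<Rightarrow> 'a" where
  "shp q F G [] = F [] * G []"
| "shp q F G (c # w) = shp q (\<lambda>u. F (c # u)) G w
      + shp q (\<lambda>u. q powi psum u c * F u) (\<lambda>u. G (c # u)) w"

lemma psum_simps[simp]: "psum [] c = 0" "psum (d # u) c = lpair d c + psum u c"
  by (simp_all add: psum_def)

lemma shp_zero_left[simp]: "shp q (\<lambda>u. 0) G w = 0"
  by (induction w arbitrary: G) simp_all

lemma shp_zero_right[simp]: "shp q F (\<lambda>u. 0) w = 0"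
  by (induction w arbitrary: F) simp_all

lemma shp_add_left: "shp q (\<lambda>u. F1 u + F2 u) G w = shp q F1 G w + shp q F2 G w"
  by (induction w arbitrary: F1 F2 G) (simp_all add: distrib_left distrib_right)

lemma shp_add_right: "shp q F (\<lambda>u. G1 u + G2 u) w = shp q F G1 w + shp q F G2 w"
  by (induction w arbitrary: F G1 G2) (simp_all add: distrib_left distrib_right)

lemma shp_smult_left: "shp q (\<lambda>u. a * F u) G w = a * shp q F G w"
proof (induction w arbitrary: F G)
  case Nil then show ?case by simp
next
  case (Cons c w)
  have "(\<lambda>u. q powi psum u c * (a * F u)) = (\<lambda>u. a * (q powi psum u c * F u))"
    by (simp add: mult.left_commute)
  then show ?case using Cons by (simp add: distrib_left)
qed

lemma shp_smult_right: "shp q F (\<lambda>u. a * G u) w = a * shp q F G w"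
  by (induction w arbitrary: F G) (simp_all add: distrib_left mult.left_commute)


lemma shp_diff_left: "shp q (\<lambda>u. F1 u - F2 u) G w = shp q F1 G w - shp q F2 G w"
proof -
  have eq: "(\<lambda>u. F1 u - F2 u) = (\<lambda>u. F1 u + (-1) * F2 u)" by (rule ext) simp
  show ?thesis by (simp only: eq shp_add_left shp_smult_left) simp
qed

lemma shp_diff_right: "shp q F (\<lambda>u. G1 u - G2 u) w = shp q F G1 w - shp q F G2 w"
proof -
  have eq: "(\<lambda>u. G1 u - G2 u) = (\<lambda>u. G1 u + (-1) * G2 u)" by (rule ext) simp
  show ?thesis by (simp only: eq shp_add_right shp_smult_right) simp
qed

lemma shp_neg_left: "shp q (\<lambda>u. - F u) G w = - shp q F G w"
proof -
  have eq: "(\<lambda>u. - F u) = (\<lambda>u. (-1) * F u)" by (rule ext) simp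
  show ?thesis by (simp only: eq shp_smult_left) simp
qed

lemma shp_neg_right: "shp q F (\<lambda>u. - G u) w = - shp q F G w"
proof -
  have eq: "(\<lambda>u. - G u) = (\<lambda>u. (-1) * G u)" by (rule ext) simp
  show ?thesis by (simp only: eq shp_smult_right) simp
qed

lemma shp_sum_left: "finite S \<Longrightarrow> shp q (\<lambda>u. \<Sum>i\<in>S. f i u) G w = (\<Sum>i\<in>S. shp q (f i) G w)"
  by (induction S rule: finite_induct) (simp_all add: shp_add_left)

lemma shp_sum_right: "finite S \<Longrightarrow> shp q F (\<lambda>u. \<Sum>i\<in>S. g i u) w = (\<Sum>i\<in>S. shp q F (g i) w)"
  by (induction S rule: finite_induct) (simp_all add: shp_add_right)

lemma basis_simps[simp]: "basis v [] = (if v = [] then 1 else 0)"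
  "basis v (c # u) = (case v of [] \<Rightarrow> 0 | d # v' \<Rightarrow> (if d = c then basis v' u else 0))"
  by (auto simp: basis_def split: list.split)

lemma tw_basis_nil: "(\<lambda>u. (q::'a::field) powi psum u c * basis [] u) = basis []"
  by (rule ext) (simp add: basis_def)

lemma dl_basis_nil: "(\<lambda>u. basis [] (c # u)) = (\<lambda>u. 0)"
  by (rule ext) simp

lemma shp_unit_left[simp]: "shp q (basis []) F w = F w"
  by (induction w arbitrary: F) (simp_all add: tw_basis_nil dl_basis_nil)

lemma shp_unit_right[simp]: "shp q F (basis []) w = F w"
  by (induction w arbitrary: F) (simp_all add: dl_basis_nil)

lemma tw_shp:
  assumes q: "q \<noteq> 0"
  shows "q powi psum u c * shp q F G u
    = shp q (\<lambda>v. q powi psum v c * F v) (\<lambda>v. q powi psum v c * G v) u"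
proof (induction u arbitrary: F G)
  case Nil then show ?case by simp
next
  case (Cons d u)
  have e1: "(\<lambda>v. q powi psum (d # v) c * F (d # v)) = (\<lambda>v. q powi lpair d c * (q powi psum v c * F (d # v)))"
    by (rule ext) (simp add: power_int_add q)
  have e2: "(\<lambda>v. q powi psum (d # v) c * G (d # v)) = (\<lambda>v. q powi lpair d c * (q powi psum v c * G (d # v)))"
    by (rule ext) (simp add: power_int_add q)
  have e3: "(\<lambda>v. q powi psum v d * (q powi psum v c * F v)) = (\<lambda>v. q powi psum v c * (q powi psum v d * F v))"
    by (rule ext) (simp add: mult.left_commute)
  have "q powi psum (d # u) c * shp q F G (d # u)
     = q powi lpair d c * (q powi psum u c * shp q (\<lambda>v. F (d # v)) G u)
       + q powi lpair d c * (q powi psum u c * shp q (\<lambda>v. q powi psum v d * F v) (\<lambda>v. G (d # v)) u)"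
    by (simp add: power_int_add q algebra_simps)
  also have "\<dots> = q powi lpair d c * shp q (\<lambda>v. q powi psum v c * F (d # v)) (\<lambda>v. q powi psum v c * G v) u
       + q powi lpair d c * shp q (\<lambda>v. q powi psum v c * (q powi psum v d * F v)) (\<lambda>v. q powi psum v c * G (d # v)) u"
    using Cons.IH by simp
  also have "\<dots> = shp q (\<lambda>v. q powi psum v c * F v) (\<lambda>v. q powi psum v c * G v) (d # u)"
    by (simp only: shp.simps e1 e2 e3 shp_smult_left shp_smult_right)
  finally show ?case .
qed

lemma shp_assoc:
  assumes q: "q \<noteq> 0"
  shows "shp q (shp q F G) H w = shp q F (shp q G H) w"
proof (induction w arbitrary: F G H)
  case Nil then show ?case by simp
next
  case (Cons c w)
  have t: "(\<lambda>u. q powi psum u c * shp q F G u)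
     = shp q (\<lambda>v. q powi psum v c * F v) (\<lambda>v. q powi psum v c * G v)"
    by (rule ext) (simp add: tw_shp q)
  have "shp q (shp q F G) H (c # w)
      = shp q (\<lambda>u. shp q (\<lambda>u. F (c # u)) G u + shp q (\<lambda>u. q powi psum u c * F u) (\<lambda>u. G (c # u)) u) H w
      + shp q (\<lambda>u. q powi psum u c * shp q F G u) (\<lambda>u. H (c # u)) w"
    by simp
  also have "\<dots> = shp q (shp q (\<lambda>u. F (c # u)) G) H w
      + shp q (shp q (\<lambda>u. q powi psum u c * F u) (\<lambda>u. G (c # u))) H w
      + shp q (shp q (\<lambda>v. q powi psum v c * F v) (\<lambda>v. q powi psum v c * G v)) (\<lambda>u. H (c # u)) w"
    by (simp only: t shp_add_left)
  also have "\<dots> = shp q F (shp q G H) (c # w)"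
    by (simp add: Cons.IH shp_add_right)
  finally show ?case .
qed


lemma dl_basis_cons: "(\<lambda>x. basis (a # u) (c # x)) = (if a = c then basis u else (\<lambda>_. 0))"
  by (rule ext) simp

lemma tw_basis: "(\<lambda>x. (q::'a::field) powi psum x c * basis u x) = (\<lambda>x. q powi psum u c * basis u x)"
  by (rule ext) (simp add: basis_def)

lemma qsh_shp: "qsh q u v w = shp q (basis u) (basis v) w"
proof (induction w arbitrary: u v)
  case Nil
  then show ?case
    by (cases u; cases v) (simp_all add: lprefix_def)
next
  case (Cons c w)
  show ?case
  proof (cases u)
    case Nil then show ?thesis by (simp del: shp.simps)
  next
    case (Cons a u')
    show ?thesis
    proof (cases v)
      case Nil then show ?thesis using \<open>u = a # u'\<close> by (simp del: shp.simps)
    next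
      case (Cons b v')
      have ps: "(\<Sum>d\<leftarrow>a # u'. lpair d b) = psum (a # u') b" by (simp add: psum_def)
      show ?thesis using \<open>u = a # u'\<close> \<open>v = b # v'\<close>
        by (simp only: qsh.simps shp.simps dl_basis_cons tw_basis ps)
           (auto simp: lprefix_def Cons.IH shp_smult_left)
    qed
  qed
qed

lemma basis_expand:
  assumes "finite {u. f u \<noteq> 0}"
  shows "(\<lambda>w. \<Sum>u\<in>{u. f u \<noteq> 0}. f u * basis u w) = (f :: word \<Rightarrow> 'a::comm_ring_1)"
proof (rule ext)
  fix w
  have "(\<Sum>u\<in>{u. f u \<noteq> 0}. f u * basis u w) = (\<Sum>u\<in>{u. f u \<noteq> 0}. if u = w then f u else 0)"
    by (rule sum.cong) (auto simp: basis_def)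
  also have "\<dots> = f w" using assms by (simp add: sum.delta')
  finally show "(\<Sum>u\<in>{u. f u \<noteq> 0}. f u * basis u w) = f w" .
qed

lemma qshuffle_shp:
  assumes "finite {u. f u \<noteq> 0}" "finite {v. g v \<noteq> 0}"
  shows "qshuffle q f g w = shp q f g w"
proof -
  have "qshuffle q f g w = (\<Sum>u\<in>{u. f u \<noteq> 0}. f u * (\<Sum>v\<in>{v. g v \<noteq> 0}. g v * shp q (basis u) (basis v) w))"
    unfolding qshuffle_def qsh_shp by (simp add: sum_distrib_left mult.assoc)
  also have "\<dots> = (\<Sum>u\<in>{u. f u \<noteq> 0}. f u * shp q (basis u) (\<lambda>x. \<Sum>v\<in>{v. g v \<noteq> 0}. g v * basis v x) w)"
    using assms(2) by (simp add: shp_sum_right shp_smult_right)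
  also have "\<dots> = shp q (\<lambda>x. \<Sum>u\<in>{u. f u \<noteq> 0}. f u * basis u x) (\<lambda>x. \<Sum>v\<in>{v. g v \<noteq> 0}. g v * basis v x) w"
    using assms(1) by (simp add: shp_sum_left shp_smult_left)
  also have "\<dots> = shp q f g w" using assms by (simp only: basis_expand)
  finally show ?thesis .
qed



definition qn :: "'a::field \<Rightarrow> nat \<Rightarrow> 'a" where
  "qn q n = (q ^ n - inverse q ^ n) / (q - inverse q)"

lemma qint_qn: "qint q (int n) = qn q n"
  by (simp add: qint_def qn_def power_int_minus power_inverse)

lemma qn_Suc1:
  assumes "q - inverse q \<noteq> 0"
  shows "qn q (Suc n) = inverse q ^ n + q * qn q n"
proof -
  have key: "q ^ Suc n - inverse q ^ Suc n = (q - inverse q) * inverse q ^ n + q * (q ^ n - inverse q ^ n)"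
    by (simp add: algebra_simps)
  show ?thesis unfolding qn_def key using assms by (simp add: field_simps)
qed

lemma qn_Suc2:
  assumes "q - inverse q \<noteq> 0"
  shows "qn q (Suc n) = q ^ n + inverse q * qn q n"
proof -
  have key: "q ^ Suc n - inverse q ^ Suc n = (q - inverse q) * q ^ n + inverse q * (q ^ n - inverse q ^ n)"
    by (simp add: algebra_simps)
  have "qn q (Suc n) = ((q - inverse q) * q ^ n) / (q - inverse q) + inverse q * ((q ^ n - inverse q ^ n) / (q - inverse q))"
    unfolding qn_def key by (simp only: add_divide_distrib times_divide_eq_right)
  then show ?thesis using assms by (simp add: qn_def)
qed

lemma qn_0[simp]: "qn q 0 = 0" by (simp add: qn_def)
lemma qn_1: "q - inverse q \<noteq> 0 \<Longrightarrow> qn q 1 = 1" by (simp add: qn_def)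
lemma qn_2: "q - inverse q \<noteq> 0 \<Longrightarrow> qn q 2 = q + inverse q"
  using qn_Suc1[of q 1] qn_1[of q] by (simp add: numeral_2_eq_2)

lemma barsum_simps[simp]: "barsum [] = 0" "barsum (d # u) = lbar d + barsum u"
  by (simp_all add: barsum_def)

lemma lpair_lbar: "lpair d c = 2 * lbar d * lbar c"
  by (cases d; cases c) simp_all

lemma psum_bar: "psum u c = 2 * lbar c * barsum u"
  by (induction u) (simp_all add: lpair_lbar algebra_simps)

fun pwr :: "'a::field \<Rightarrow> 'a \<Rightarrow> nat \<Rightarrow> word \<Rightarrow> 'a" where
  "pwr q r 0 [] = 1"
| "pwr q r 0 (c # u) = 0"
| "pwr q r (Suc h) [] = 0"
| "pwr q r (Suc h) (X # u) = r * qn q (Suc (Suc h)) * pwr q r (Suc (Suc h)) u"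
| "pwr q r (Suc h) (Y # u) = (if h = 0 then pwr q r 0 u else qn q h * pwr q r h u)"

lemma pwr0: "pwr q r 0 = basis []"
  by (rule ext, case_tac x) (simp_all add: basis_def)

lemma pwr_bar: "pwr q r h u \<noteq> 0 \<Longrightarrow> barsum u = - int h"
  by (induction q r h u rule: pwr.induct) (auto split: if_splits)

lemma tw_pwr_X[simp]: "(q::'a::field) powi psum u X * pwr q r h u = inverse q ^ (2 * h) * pwr q r h u"
proof (cases "pwr q r h u = 0")
  case False
  then have "psum u X = - int (2 * h)" by (simp add: psum_bar pwr_bar)
  then have "q powi psum u X = inverse q ^ (2 * h)"
    by (simp only: power_int_minus power_int_of_nat power_inverse)
  then show ?thesis by simp
qed simp

lemma tw_pwr_Y[simp]: "(q::'a::field) powi psum u Y * pwr q r h u = q ^ (2 * h) * pwr q r h u"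
proof (cases "pwr q r h u = 0")
  case False
  then have "psum u Y = int (2 * h)" by (simp add: psum_bar pwr_bar)
  then have "q powi psum u Y = q ^ (2 * h)"
    by (simp only: power_int_of_nat)
  then show ?thesis by simp
qed simp

fun isG :: "word \<Rightarrow> bool" where
  "isG [] = True"
| "isG (X # Y # w) = isG w"
| "isG _ = False"

definition Gser :: "word \<Rightarrow> 'a::field" where
  "Gser u = (if isG u then 1 else 0)"

definition Bser :: "word \<Rightarrow> 'a::field" where
  "Bser u = (case u of Y # w \<Rightarrow> Gser w | _ \<Rightarrow> 0)"

lemma Gser_simps[simp]: "Gser [] = 1" "Gser (X # u) = Bser u" "Gser (Y # u) = 0"
  by (simp_all add: Gser_def Bser_def split: list.split letter.split)

lemma Bser_simps[simp]: "Bser [] = 0" "Bser (X # u) = 0" "Bser (Y # u) = Gser u"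
  by (simp_all add: Bser_def)

lemma isG_bar: "isG u \<Longrightarrow> barsum u = 0"
  by (induction u rule: isG.induct) auto

lemma tw_G[simp]: "(q::'a::field) powi psum u c * Gser u = Gser u"
  by (cases "isG u") (simp_all add: Gser_def psum_bar isG_bar)

lemma tw_B_X[simp]: "(q::'a::field) powi psum u X * Bser u = inverse q ^ 2 * Bser u"
  by (cases u rule: list.exhaust; case_tac "x21 = X"; cases "isG (tl u)")
     (auto simp: Bser_def Gser_def psum_bar isG_bar power_int_minus power_inverse elim: letter.exhaust split: letter.split)


lemma tw_B_Y[simp]: "(q::'a::field) powi psum u Y * Bser u = q ^ 2 * Bser u"
  by (cases u rule: list.exhaust; case_tac "x21 = X"; cases "isG (tl u)")
     (auto simp: Bser_def Gser_def psum_bar isG_bar elim: letter.exhaust split: letter.split)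

definition Phi :: "'a::field \<Rightarrow> nat \<Rightarrow> word \<Rightarrow> 'a" where
  "Phi q h w = shp q (pwr q (-q) (Suc (Suc h))) Gser w
      - inverse q ^ Suc (Suc h) * shp q (pwr q (-q) (Suc h)) Bser w"

definition Phi' :: "'a::field \<Rightarrow> nat \<Rightarrow> word \<Rightarrow> 'a" where
  "Phi' q h w = shp q Gser (pwr q (-inverse q) (Suc (Suc h))) w
      - inverse q ^ h * shp q Bser (pwr q (-inverse q) (Suc h)) w"

lemma Phi_Nil: "Phi q h [] = 0" by (simp add: Phi_def)
lemma Phi'_Nil: "Phi' q h [] = 0" by (simp add: Phi'_def)

lemma Phi_X:
  assumes q: "q \<noteq> 0" and qq: "q - inverse q \<noteq> 0"
  shows "Phi q h (X # w) = - q * qn q (Suc (Suc (Suc h))) * Phi q (Suc h) w"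
proof -
  define T1 where "T1 = shp q (pwr q (-q) (Suc (Suc (Suc h)))) Gser w"
  define T2 where "T2 = shp q (pwr q (-q) (Suc (Suc h))) Bser w"
  have L: "Phi q h (X # w) = (- q * qn q (Suc (Suc (Suc h)))) * T1
       + (inverse q ^ (2 * Suc (Suc h)) + inverse q ^ Suc (Suc h) * (q * qn q (Suc (Suc h)))) * T2"
    by (simp add: Phi_def T1_def T2_def shp_smult_left shp_smult_right shp_neg_left shp_neg_right;
        simp add: algebra_simps)
  have R: "- q * qn q (Suc (Suc (Suc h))) * Phi q (Suc h) w = (- q * qn q (Suc (Suc (Suc h)))) * T1
       + (q * qn q (Suc (Suc (Suc h))) * inverse q ^ Suc (Suc (Suc h))) * T2"
    by (simp add: Phi_def T1_def T2_def algebra_simps)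
  have c: "inverse q ^ (2 * Suc (Suc h)) + inverse q ^ Suc (Suc h) * (q * qn q (Suc (Suc h)))
      = q * qn q (Suc (Suc (Suc h))) * inverse q ^ Suc (Suc (Suc h))"
  proof -
    have "q * qn q (Suc (Suc (Suc h))) * inverse q ^ Suc (Suc (Suc h))
        = (q * inverse q) * inverse q ^ Suc (Suc h) * (inverse q ^ Suc (Suc h) + q * qn q (Suc (Suc h)))"
      by (simp only: qn_Suc1[OF qq, of "Suc (Suc h)"] power_Suc[of "inverse q" "Suc (Suc h)"]) (simp add: algebra_simps)
    also have "\<dots> = inverse q ^ (2 * Suc (Suc h)) + inverse q ^ Suc (Suc h) * (q * qn q (Suc (Suc h)))"
      using q by (simp add: algebra_simps power_add[symmetric] mult_2 mult_2_right)
    finally show ?thesis by simp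
  qed
  show ?thesis using L R c by simp
qed


lemma pq_pow: "(q::'a::field) \<noteq> 0 \<Longrightarrow> inverse q ^ n * q ^ n = 1"
  by (simp add: power_mult_distrib[symmetric])

lemma Phi_Y_Suc:
  assumes q: "q \<noteq> 0" and qq: "q - inverse q \<noteq> 0"
  shows "Phi q (Suc h) (Y # w) = inverse q * qn q (Suc h) * Phi q h w"
proof -
  define T1 where "T1 = shp q (pwr q (-q) (Suc (Suc h))) Gser w"
  define T2 where "T2 = shp q (pwr q (-q) (Suc h)) Bser w"
  have L: "Phi q (Suc h) (Y # w) = (qn q (Suc (Suc h)) - inverse q ^ Suc (Suc (Suc h)) * q ^ (2 * Suc (Suc h))) * T1
       - (inverse q ^ Suc (Suc (Suc h)) * qn q (Suc h)) * T2"
    by (simp add: Phi_def T1_def T2_def shp_smult_left shp_smult_right shp_neg_left shp_neg_right;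
        simp add: algebra_simps)
  have R: "inverse q * qn q (Suc h) * Phi q h w = (inverse q * qn q (Suc h)) * T1
       - (inverse q * qn q (Suc h) * inverse q ^ Suc (Suc h)) * T2"
    by (simp add: Phi_def T1_def T2_def algebra_simps)
  have c1: "inverse q ^ Suc (Suc (Suc h)) * q ^ (2 * Suc (Suc h)) = q ^ Suc h"
  proof -
    have n: "2 * Suc (Suc h) = Suc (Suc (Suc h)) + Suc h" by simp
    have "q ^ (2 * Suc (Suc h)) = q ^ Suc (Suc (Suc h)) * q ^ Suc h"
      by (simp only: n power_add)
    then have "inverse q ^ Suc (Suc (Suc h)) * q ^ (2 * Suc (Suc h))
        = (inverse q ^ Suc (Suc (Suc h)) * q ^ Suc (Suc (Suc h))) * q ^ Suc h"
      by (simp only: mult.assoc)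
    then show ?thesis by (simp only: pq_pow[OF q] mult_1_left)
  qed
  have c: "qn q (Suc (Suc h)) - inverse q ^ Suc (Suc (Suc h)) * q ^ (2 * Suc (Suc h)) = inverse q * qn q (Suc h)"
  proof -
    have "qn q (Suc (Suc h)) = q ^ Suc h + inverse q * qn q (Suc h)" by (rule qn_Suc2[OF qq])
    then show ?thesis by (simp only: c1) simp
  qed
  have c2: "inverse q ^ Suc (Suc (Suc h)) * qn q (Suc h) = inverse q * qn q (Suc h) * inverse q ^ Suc (Suc h)"
    by (simp add: algebra_simps)
  show ?thesis by (simp only: L R c c2)
qed

lemma Phi_Y_0:
  assumes q: "q \<noteq> 0" and qq: "q - inverse q \<noteq> 0"
  shows "Phi q 0 (Y # w) = - (inverse q ^ 2 * Bser w)"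
proof -
  have e: "inverse q ^ 2 * q ^ 2 = 1" using pq_pow[OF q] by simp
  have "Phi q 0 (Y # w) = (qn q 1 - inverse q ^ 2 * q ^ 2) * shp q (pwr q (-q) (Suc 0)) Gser w
       - inverse q ^ 2 * Bser w"
    by (simp add: Phi_def shp_smult_left shp_smult_right shp_neg_left shp_neg_right pwr0;
        simp add: algebra_simps power2_eq_square)
  then show ?thesis using e qn_1[OF qq] by simp
qed

lemma Phi'_X:
  assumes q: "q \<noteq> 0" and qq: "q - inverse q \<noteq> 0"
  shows "Phi' q h (X # w) = - inverse q * qn q (Suc (Suc (Suc h))) * Phi' q (Suc h) w"
proof -
  define T1 where "T1 = shp q Gser (pwr q (-inverse q) (Suc (Suc (Suc h)))) w"
  define T2 where "T2 = shp q Bser (pwr q (-inverse q) (Suc (Suc h))) w"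
  have L: "Phi' q h (X # w) = (- inverse q * qn q (Suc (Suc (Suc h)))) * T1
       + (1 + inverse q ^ h * inverse q ^ 2 * (inverse q * qn q (Suc (Suc h)))) * T2"
    by (simp add: Phi'_def T1_def T2_def shp_smult_left shp_smult_right shp_neg_left shp_neg_right;
        simp add: algebra_simps)
  have R: "- inverse q * qn q (Suc (Suc (Suc h))) * Phi' q (Suc h) w = (- inverse q * qn q (Suc (Suc (Suc h)))) * T1
       + (inverse q * qn q (Suc (Suc (Suc h))) * inverse q ^ Suc h) * T2"
    by (simp add: Phi'_def T1_def T2_def algebra_simps)
  have c: "1 + inverse q ^ h * inverse q ^ 2 * (inverse q * qn q (Suc (Suc h)))
      = inverse q * qn q (Suc (Suc (Suc h))) * inverse q ^ Suc h"
  proof -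
    have "inverse q * qn q (Suc (Suc (Suc h))) * inverse q ^ Suc h
        = inverse q ^ Suc (Suc h) * q ^ Suc (Suc h) + inverse q ^ Suc (Suc h) * (inverse q * qn q (Suc (Suc h)))"
      by (simp only: qn_Suc2[OF qq, of "Suc (Suc h)"]) (simp add: algebra_simps)
    also have "\<dots> = 1 + inverse q ^ h * inverse q ^ 2 * (inverse q * qn q (Suc (Suc h)))"
      using pq_pow[OF q, of "Suc (Suc h)"] by (simp add: algebra_simps power2_eq_square)
    finally show ?thesis by simp
  qed
  show ?thesis using L R c by simp
qed

lemma Phi'_Y_Suc:
  assumes q: "q \<noteq> 0" and qq: "q - inverse q \<noteq> 0"
  shows "Phi' q (Suc h) (Y # w) = q * qn q (Suc h) * Phi' q h w"
proof -
  define T1 where "T1 = shp q Gser (pwr q (-inverse q) (Suc (Suc h))) w"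
  define T2 where "T2 = shp q Bser (pwr q (-inverse q) (Suc h)) w"
  have L: "Phi' q (Suc h) (Y # w) = (qn q (Suc (Suc h)) - inverse q ^ Suc h) * T1
       - (inverse q ^ Suc h * q ^ 2 * qn q (Suc h)) * T2"
    by (simp add: Phi'_def T1_def T2_def shp_smult_left shp_smult_right shp_neg_left shp_neg_right;
        simp add: algebra_simps)
  have R: "q * qn q (Suc h) * Phi' q h w = (q * qn q (Suc h)) * T1
       - (q * qn q (Suc h) * inverse q ^ h) * T2"
    by (simp add: Phi'_def T1_def T2_def algebra_simps)
  have c1: "qn q (Suc (Suc h)) - inverse q ^ Suc h = q * qn q (Suc h)"
    using qn_Suc1[OF qq, of "Suc h"] by simp
  have c2: "inverse q ^ Suc h * q ^ 2 * qn q (Suc h) = q * qn q (Suc h) * inverse q ^ h"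
    using q by (simp add: power2_eq_square field_simps)
  show ?thesis using L R c1 c2 by simp
qed

lemma Phi'_Y_0:
  assumes q: "q \<noteq> 0" and qq: "q - inverse q \<noteq> 0"
  shows "Phi' q 0 (Y # w) = - (q ^ 2 * Bser w)"
proof -
  have "Phi' q 0 (Y # w) = (qn q 1 - 1) * shp q Gser (pwr q (-inverse q) (Suc 0)) w
       - q ^ 2 * Bser w"
    by (simp add: Phi'_def shp_smult_left shp_smult_right shp_neg_left shp_neg_right pwr0;
        simp add: algebra_simps)
  then show ?thesis using qn_1[OF qq] by simp
qed

lemma Phi'_Phi:
  assumes q: "q \<noteq> 0" and qq: "q - inverse q \<noteq> 0"
  shows "Phi' q h w = q ^ (2 * h + 4) * Phi q h w"
proof (induction w arbitrary: h)
  case Nil then show ?case by (simp add: Phi_Nil Phi'_Nil)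
next
  case (Cons c w)
  show ?case
  proof (cases c)
    case X
    have "Phi' q h (X # w) = - inverse q * qn q (Suc (Suc (Suc h))) * (q ^ (2 * Suc h + 4) * Phi q (Suc h) w)"
      by (simp add: Phi'_X[OF q qq] Cons.IH)
    also have "\<dots> = q ^ (2 * h + 4) * (- q * qn q (Suc (Suc (Suc h))) * Phi q (Suc h) w)"
    proof -
      have n: "2 * Suc h + 4 = Suc (Suc (2 * h + 4))" by simp
      have "q ^ (2 * Suc h + 4) = q * (q * q ^ (2 * h + 4))"
        by (simp only: n power_Suc)
      then have "inverse q * q ^ (2 * Suc h + 4) = (inverse q * q) * (q * q ^ (2 * h + 4))"
        by (simp only: mult.assoc)
      then have "inverse q * q ^ (2 * Suc h + 4) = q ^ (2 * h + 4) * q"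
        using q by simp
      then show ?thesis by (simp add: algebra_simps; metis mult.assoc mult.commute)
    qed
    finally show ?thesis using X by (simp add: Phi_X[OF q qq])
  next
    case Y
    show ?thesis
    proof (cases h)
      case 0
      have "q ^ 4 * inverse q ^ 2 = q ^ 2 * (q ^ 2 * inverse q ^ 2)"
        by (simp add: power_add[symmetric] mult.assoc[symmetric])
      moreover have "q ^ 2 * inverse q ^ 2 = 1" using pq_pow[OF q, of 2] by (simp add: mult.commute)
      ultimately have "q ^ 2 = q ^ 4 * inverse q ^ 2" by simp
      then show ?thesis using Y 0 by (simp add: Phi_Y_0[OF q qq] Phi'_Y_0[OF q qq])
    next
      case (Suc k)
      have n: "2 * Suc k + 4 = Suc (Suc (2 * k + 4))" by simp
      have "q ^ (2 * Suc k + 4) * inverse q = q * (q * inverse q) * q ^ (2 * k + 4)"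
        by (simp only: n power_Suc) algebra
      moreover have "q * inverse q = 1" using q by simp
      ultimately have "q ^ (2 * Suc k + 4) * inverse q = q * q ^ (2 * k + 4)"
        by (simp only: mult_1_right)
      then have "q * q ^ (2 * k + 4) = q ^ (2 * Suc k + 4) * inverse q" by simp
      have "Phi' q (Suc k) (Y # w) = q * qn q (Suc k) * (q ^ (2 * k + 4) * Phi q k w)"
        by (simp add: Phi'_Y_Suc[OF q qq] Cons.IH)
      also have "\<dots> = (q * q ^ (2 * k + 4)) * (qn q (Suc k) * Phi q k w)" by (simp only: mult_ac)
      also have "\<dots> = (q ^ (2 * Suc k + 4) * inverse q) * (qn q (Suc k) * Phi q k w)"
        by (simp only: \<open>q * q ^ (2 * k + 4) = q ^ (2 * Suc k + 4) * inverse q\<close>)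
      also have "\<dots> = q ^ (2 * Suc k + 4) * Phi q (Suc k) (Y # w)"
        by (simp add: Phi_Y_Suc[OF q qq] mult_ac)
      finally show ?thesis using Y Suc by simp
    qed
  qed
qed



definition Aser :: "'a::field \<Rightarrow> 'a \<Rightarrow> word \<Rightarrow> 'a" where
  "Aser q r u = (case u of [] \<Rightarrow> 0 | c # u' \<Rightarrow> (if c = X then r * pwr q r (Suc 0) u' else 0))"

lemma Aser_simps[simp]: "Aser q r [] = 0" "Aser q r (X # u) = r * pwr q r (Suc 0) u" "Aser q r (Y # u) = 0"
  by (simp_all add: Aser_def)

lemma tw_A[simp]: "(q::'a::field) powi psum u c * Aser q r u = Aser q r u"
proof (cases "Aser q r u = 0")
  case False
  then obtain u' where u: "u = X # u'" and nz: "pwr q r (Suc 0) u' \<noteq> 0"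
  proof (cases u)
    case (Cons a u')
    then show ?thesis using False that by (cases a) auto
  qed simp
  then have "barsum u' = -1" using pwr_bar by fastforce
  then have "psum u c = 0" using u by (simp add: psum_bar)
  then show ?thesis by simp
qed simp

definition Omega :: "'a::field \<Rightarrow> word \<Rightarrow> 'a" where
  "Omega q w = shp q (Aser q (-q)) Gser w"

definition Omega' :: "'a::field \<Rightarrow> word \<Rightarrow> 'a" where
  "Omega' q w = shp q Gser (Aser q (-inverse q)) w"

lemma Om_Nil: "Omega q [] = 0" by (simp add: Omega_def)
lemma Om'_Nil: "Omega' q [] = 0" by (simp add: Omega'_def)
lemma Om_Y: "Omega q (Y # w) = 0" by (simp add: Omega_def)
lemma Om'_Y: "Omega' q (Y # w) = 0" by (simp add: Omega'_def)
lemma Om_X_Nil: "Omega q [X] = 0" by (simp add: Omega_def)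
lemma Om'_X_Nil: "Omega' q [X] = 0" by (simp add: Omega'_def)

lemma Om_XY: "Omega q (X # Y # w) = - q * Gser w + Omega q w"
  by (simp add: Omega_def shp_smult_left shp_smult_right shp_neg_left shp_neg_right pwr0)

lemma Om'_XY: "Omega' q (X # Y # w) = - inverse q * Gser w + Omega' q w"
  by (simp add: Omega'_def shp_smult_left shp_smult_right shp_neg_left shp_neg_right pwr0)

lemma Om_XX:
  assumes q: "q \<noteq> 0" and qq: "q - inverse q \<noteq> 0"
  shows "Omega q (X # X # w) = q ^ 2 * qn q 2 * Phi q 0 w"
proof -
  define T1 where "T1 = shp q (pwr q (-q) (Suc (Suc 0))) Gser w"
  define T2 where "T2 = shp q (pwr q (-q) (Suc 0)) Bser w"
  have L: "Omega q (X # X # w) = (q * q * qn q 2) * T1 - (q * inverse q ^ 2 + q) * T2"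
    by (simp add: Omega_def T1_def T2_def shp_smult_left shp_smult_right shp_neg_left shp_neg_right;
        simp add: algebra_simps numeral_2_eq_2)
  have R: "q ^ 2 * qn q 2 * Phi q 0 w = (q * q * qn q 2) * T1 - (q ^ 2 * qn q 2 * inverse q ^ 2) * T2"
    by (simp add: Phi_def T1_def T2_def algebra_simps power2_eq_square numeral_2_eq_2)
  have c: "q * inverse q ^ 2 + q = q ^ 2 * qn q 2 * inverse q ^ 2"
    using q by (simp add: qn_2[OF qq] field_simps power2_eq_square)
  show ?thesis by (simp only: L R c)
qed

lemma Om'_XX:
  assumes q: "q \<noteq> 0" and qq: "q - inverse q \<noteq> 0"
  shows "Omega' q (X # X # w) = inverse q ^ 2 * qn q 2 * Phi' q 0 w"
proof -
  define T1 where "T1 = shp q Gser (pwr q (-inverse q) (Suc (Suc 0))) w"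
  define T2 where "T2 = shp q Bser (pwr q (-inverse q) (Suc 0)) w"
  have L: "Omega' q (X # X # w) = (inverse q * inverse q * qn q 2) * T1 - (inverse q ^ 2 * inverse q + inverse q) * T2"
    by (simp add: Omega'_def T1_def T2_def shp_smult_left shp_smult_right shp_neg_left shp_neg_right;
        simp add: algebra_simps numeral_2_eq_2)
  have R: "inverse q ^ 2 * qn q 2 * Phi' q 0 w = (inverse q * inverse q * qn q 2) * T1 - (inverse q ^ 2 * qn q 2) * T2"
    by (simp add: Phi'_def T1_def T2_def algebra_simps power2_eq_square numeral_2_eq_2)
  have c: "inverse q ^ 2 * inverse q + inverse q = inverse q ^ 2 * qn q 2"
    using q by (simp add: qn_2[OF qq] field_simps power2_eq_square)
  show ?thesis by (simp only: L R c)
qed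

lemma D_lemma:
  assumes q: "q \<noteq> 0" and qq: "q - inverse q \<noteq> 0"
  shows "Omega' q w - Omega q w = (q - inverse q) * of_nat (length w div 2) * Gser w"
proof (induction w rule: length_induct)
  case (1 w)
  show ?case
  proof (cases w)
    case Nil then show ?thesis by (simp add: Om_Nil Om'_Nil)
  next
    case (Cons c w1)
    show ?thesis
    proof (cases c)
      case Y then show ?thesis using Cons by (simp add: Om_Y Om'_Y)
    next
      case X
      show ?thesis
      proof (cases w1)
        case Nil then show ?thesis using Cons X by (simp add: Om_X_Nil Om'_X_Nil)
      next
        case (Cons d w2)
        have IH: "Omega' q w2 - Omega q w2 = (q - inverse q) * of_nat (length w2 div 2) * Gser w2"
          using "1" \<open>w = c # w1\<close> Cons by simp
        show ?thesis
        proof (cases d)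
          case X
          have e: "inverse q ^ 2 * q ^ 4 = q ^ 2"
          proof -
            have "inverse q ^ 2 * q ^ 4 = (inverse q ^ 2 * q ^ 2) * q ^ 2"
              by (simp add: power_add[symmetric] mult.assoc)
            then show ?thesis using pq_pow[OF q, of 2] by simp
          qed
          have "Omega' q (X # X # w2) - Omega q (X # X # w2)
              = (inverse q ^ 2 * q ^ 4 - q ^ 2) * (qn q 2 * Phi q 0 w2)"
            by (simp add: Om_XX[OF q qq] Om'_XX[OF q qq] Phi'_Phi[OF q qq] algebra_simps)
          also have "\<dots> = 0" by (simp add: e)
          finally show ?thesis using \<open>w = c # w1\<close> Cons X \<open>c = X\<close> by simp
        next
          case Y
          have "Omega' q (X # Y # w2) - Omega q (X # Y # w2)
              = (q - inverse q) * Gser w2 + (Omega' q w2 - Omega q w2)"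
            by (simp add: Om_XY Om'_XY algebra_simps)
          also have "\<dots> = (q - inverse q) * of_nat (length w2 div 2 + 1) * Gser w2"
            by (simp add: IH algebra_simps)
          finally show ?thesis using \<open>w = c # w1\<close> Cons Y \<open>c = X\<close> by simp
        qed
      qed
    qed
  qed
qed



fun alt :: "nat \<Rightarrow> word" where
  "alt 0 = []"
| "alt (Suc n) = X # Y # alt n"

definition ga :: "nat \<Rightarrow> word \<Rightarrow> 'a::field" where "ga i = basis (alt i)"
definition gb :: "nat \<Rightarrow> word \<Rightarrow> 'a::field" where "gb i = basis (Y # alt i)"

lemma ga_simps[simp]: "ga i [] = (if i = 0 then 1 else 0)" "ga 0 (c # u) = 0"
  "ga (Suc i) (X # u) = gb i u" "ga i (Y # u) = 0"
  by (cases i; simp add: ga_def gb_def)+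

lemma gb_simps[simp]: "gb i [] = 0" "gb i (X # u) = 0" "gb i (Y # u) = ga i u"
  by (simp_all add: ga_def gb_def)

lemma ga0: "ga 0 = basis []" by (simp add: ga_def)

lemma alt_bar: "barsum (alt i) = 0" by (induction i) simp_all

lemma tw_ga[simp]: "(q::'a::field) powi psum u c * ga i u = ga i u"
  by (simp add: ga_def basis_def psum_bar alt_bar)

lemma tw_gb_X[simp]: "(q::'a::field) powi psum u X * gb i u = inverse q ^ 2 * gb i u"
  by (simp add: gb_def basis_def psum_bar alt_bar power_int_minus power_inverse)

lemma tw_gb_Y[simp]: "(q::'a::field) powi psum u Y * gb i u = q ^ 2 * gb i u"
  by (simp add: gb_def basis_def psum_bar alt_bar)

lemma G_comm_aux:
  fixes q :: "'a::field"
  assumes q0: "q \<noteq> 0"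
  shows "shp q (ga i) (ga j) w = shp q (ga j) (ga i) w \<and> shp q (gb i) (gb j) w = shp q (gb j) (gb i) w"
proof (induction "length w" arbitrary: w i j rule: less_induct)
  case less
  note IH = less
  show ?case
  proof (cases w)
    case Nil then show ?thesis by (simp add: mult.commute)
  next
    case (Cons c w1)
    have aa: "shp q (ga i) (ga j) w = shp q (ga j) (ga i) w"
    proof (cases "i = 0 \<or> j = 0")
      case True then show ?thesis by (auto simp del: shp.simps simp: ga0)
    next
      case False
      then obtain a b where ij: "i = Suc a" "j = Suc b" by (cases i; cases j) auto
      show ?thesis
      proof (cases c)
        case Y then show ?thesis using Cons by simp
      next
        case X
        have "shp q (gb a) (ga (Suc b)) w1 + shp q (ga (Suc a)) (gb b) w1
            = shp q (gb b) (ga (Suc a)) w1 + shp q (ga (Suc b)) (gb a) w1"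
        proof (cases w1)
          case Nil then show ?thesis by simp
        next
          case (Cons d w2)
          have lt: "length w2 < length w" using \<open>w = c # w1\<close> Cons by simp
          show ?thesis
          proof (cases d)
            case X
            have "shp q (gb a) (gb b) w2 = shp q (gb b) (gb a) w2" using IH[OF lt] by blast
            then show ?thesis using Cons X by (simp add: shp_smult_left)
          next
            case Y
            have "shp q (ga a) (ga (Suc b)) w2 = shp q (ga (Suc b)) (ga a) w2"
                 "shp q (ga (Suc a)) (ga b) w2 = shp q (ga b) (ga (Suc a)) w2"
              using IH[OF lt] by blast+
            then show ?thesis using Cons Y by simp
          qed
        qed
        then show ?thesis using \<open>w = c # w1\<close> X ij by simp
      qed
    qed
    have bb: "shp q (gb i) (gb j) w = shp q (gb j) (gb i) w"
    proof (cases c)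
      case X then show ?thesis using Cons by simp
    next
      case Y
      have "shp q (ga i) (gb j) w1 + q ^ 2 * shp q (gb i) (ga j) w1
          = shp q (ga j) (gb i) w1 + q ^ 2 * shp q (gb j) (ga i) w1"
      proof (cases w1)
        case Nil then show ?thesis by simp
      next
        case (Cons d w2)
        have lt: "length w2 < length w" using \<open>w = c # w1\<close> Cons by simp
        show ?thesis
        proof (cases d)
          case Y
          have "shp q (ga i) (ga j) w2 = shp q (ga j) (ga i) w2" using IH[OF lt] by blast
          then show ?thesis using Cons Y by simp
        next
          case X
          have s: "\<And>a b. shp q (gb a) (gb b) w2 = shp q (gb b) (gb a) w2" using IH[OF lt] by blast
          have e: "q ^ 2 * inverse q ^ 2 = (1::'a)" using q0 by (simp add: power_mult_distrib[symmetric])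
          show ?thesis using Cons X
            by (cases i; cases j) (simp_all add: shp_smult_left s mult.assoc[symmetric] e add.commute)
        qed
      qed
      then show ?thesis using Cons Y by (simp add: shp_smult_left)
    qed
    show ?thesis using aa bb by blast
  qed
qed

lemma G_comm: "(q::'a::field) \<noteq> 0 \<Longrightarrow> (\<lambda>w. shp q (ga i) (ga j) w) = (\<lambda>w. shp q (ga j) (ga i) w)"
  using G_comm_aux by blast



definition restr :: "nat \<Rightarrow> (word \<Rightarrow> 'a::zero) \<Rightarrow> word \<Rightarrow> 'a" where
  "restr j F u = (if length u = j then F u else 0)"

lemma restr_dl: "(\<lambda>u. restr j F (c # u)) = (case j of 0 \<Rightarrow> (\<lambda>u. 0) | Suc j' \<Rightarrow> restr j' (\<lambda>u. F (c # u)))"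
  by (rule ext) (simp add: restr_def split: nat.split)

lemma restr_tw: "(\<lambda>u. (x::'a::field) powi psum u c * restr j F u) = restr j (\<lambda>u. x powi psum u c * F u)"
  by (rule ext) (simp add: restr_def)

lemma shp_graded:
  "shp q F G w = (\<Sum>j\<le>length w. shp q (restr j F) (restr (length w - j) G) w)"
proof (induction w arbitrary: F G)
  case Nil then show ?case by (simp add: restr_def)
next
  case (Cons c w)
  let ?n = "length w"
  have A: "(\<Sum>j\<le>Suc ?n. shp q (\<lambda>u. restr j F (c # u)) (restr (Suc ?n - j) G) w)
      = (\<Sum>j\<le>?n. shp q (restr j (\<lambda>u. F (c # u))) (restr (?n - j) G) w)"
    by (subst sum.atMost_Suc_shift) (simp add: restr_dl)
  have B: "(\<Sum>j\<le>Suc ?n. shp q (\<lambda>u. q powi psum u c * restr j F u) (\<lambda>u. restr (Suc ?n - j) G (c # u)) w)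
      = (\<Sum>j\<le>?n. shp q (restr j (\<lambda>u. q powi psum u c * F u)) (restr (?n - j) (\<lambda>u. G (c # u))) w)"
  proof -
    have "\<And>j. j \<le> ?n \<Longrightarrow> (\<lambda>u. restr (Suc ?n - j) G (c # u)) = restr (?n - j) (\<lambda>u. G (c # u))"
      by (simp add: restr_dl Suc_diff_le)
    then show ?thesis
      by (subst sum.atMost_Suc) (simp add: restr_tw restr_dl)
  qed
  have "shp q F G (c # w) = shp q (\<lambda>u. F (c # u)) G w + shp q (\<lambda>u. q powi psum u c * F u) (\<lambda>u. G (c # u)) w"
    by (simp only: shp.simps)
  also have "\<dots> = (\<Sum>j\<le>?n. shp q (restr j (\<lambda>u. F (c # u))) (restr (?n - j) G) w)
      + (\<Sum>j\<le>?n. shp q (restr j (\<lambda>u. q powi psum u c * F u)) (restr (?n - j) (\<lambda>u. G (c # u))) w)"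
    by (simp only: Cons.IH[of "\<lambda>u. F (c # u)" G] Cons.IH[of "\<lambda>u. q powi psum u c * F u" "\<lambda>u. G (c # u)"])
  also have "\<dots> = (\<Sum>j\<le>Suc ?n. shp q (\<lambda>u. restr j F (c # u)) (restr (Suc ?n - j) G) w)
      + (\<Sum>j\<le>Suc ?n. shp q (\<lambda>u. q powi psum u c * restr j F u) (\<lambda>u. restr (Suc ?n - j) G (c # u)) w)"
    by (simp only: A B)
  also have "\<dots> = (\<Sum>j\<le>length (c # w). shp q (restr j F) (restr (length (c # w) - j) G) (c # w))"
    by (simp only: shp.simps sum.distrib length_Cons)
  finally show ?case .
qed

lemma shp_homog:
  assumes F: "\<And>u. length u \<noteq> a \<Longrightarrow> F u = 0" and G: "\<And>u. length u \<noteq> b \<Longrightarrow> G u = 0"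
    and w: "length w \<noteq> a + b"
  shows "shp q F G w = 0"
proof -
  have "\<And>j. j \<le> length w \<Longrightarrow> shp q (restr j F) (restr (length w - j) G) w = 0"
  proof -
    fix j assume j: "j \<le> length w"
    show "shp q (restr j F) (restr (length w - j) G) w = 0"
    proof (cases "j = a")
      case True
      then have "length w - j \<noteq> b" using w j by simp
      then have "restr (length w - j) G = (\<lambda>u. 0)" by (auto simp: restr_def G)
      then show ?thesis by simp
    next
      case False
      then have "restr j F = (\<lambda>u. 0)" by (auto simp: restr_def F)
      then show ?thesis by simp
    qed
  qed
  then show ?thesis by (simp add: shp_graded[of q F G w])
qed

lemma bar_count: "barsum v = int (count_list v X) - int (count_list v Y)"
proof (induction v)
  case (Cons a v) then show ?case by (cases a) auto
qed simp

lemma len_count: "length v = count_list v X + count_list v Y"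
proof (induction v)
  case (Cons a v) then show ?case by (cases a) auto
qed simp

lemma pwr_snoc_ex: "pwr q r (Suc h) u \<noteq> 0 \<Longrightarrow> \<exists>v. u = v @ [Y]"
proof (induction u arbitrary: h)
  case Nil then show ?case by simp
next
  case (Cons c u)
  show ?case
  proof (cases c)
    case X
    then have "pwr q r (Suc (Suc h)) u \<noteq> 0" using Cons.prems by auto
    then obtain v where "u = v @ [Y]" using Cons.IH by blast
    then show ?thesis using X by auto
  next
    case Y
    show ?thesis
    proof (cases h)
      case 0
      then have "pwr q r 0 u \<noteq> 0" using Cons.prems Y by simp
      then have "u = []" by (cases u) auto
      then show ?thesis using Y by auto
    next
      case (Suc h')
      then have "pwr q r (Suc h') u \<noteq> 0" using Cons.prems Y by auto
      then obtain v where "u = v @ [Y]" using Cons.IH by blast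
      then show ?thesis using Y by auto
    qed
  qed
qed

lemma all_le_Suc: "(\<forall>i. i \<le> Suc n \<longrightarrow> P i) = (P 0 \<and> (\<forall>i. i \<le> n \<longrightarrow> P (Suc i)))"
  by (metis Suc_le_mono not0_implies_Suc zero_le)

lemma pwr_snoc:
  assumes qq: "q - inverse q \<noteq> 0"
  shows "pwr q r (Suc h) (v @ [Y]) =
    (if (\<forall>i. i \<le> length v \<longrightarrow> 0 \<le> int h + barsum (take i v)) \<and> int h + barsum v = 0
     then r ^ count_list v X * (\<Prod>i<length v. qint q (1 + int h + barsum (take (Suc i) v))) else 0)"
proof (induction v arbitrary: h)
  case Nil
  then show ?case by (cases h) simp_all
next
  case (Cons c v)
  show ?case
  proof (cases c)
    case X
    have cond: "((\<forall>i. i \<le> length (X # v) \<longrightarrow> 0 \<le> int h + barsum (take i (X # v))) \<and> int h + barsum (X # v) = 0)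
       = ((\<forall>i. i \<le> length v \<longrightarrow> 0 \<le> int (Suc h) + barsum (take i v)) \<and> int (Suc h) + barsum v = 0)"
      by (simp only: length_Cons all_le_Suc) (simp add: algebra_simps)
    have pr: "(\<Prod>i<length (X # v). qint q (1 + int h + barsum (take (Suc i) (X # v))))
       = qn q (Suc (Suc h)) * (\<Prod>i<length v. qint q (1 + int (Suc h) + barsum (take (Suc i) v)))"
    proof -
      have "qint q (1 + int h + barsum (take (Suc 0) (X # v))) = qn q (Suc (Suc h))"
        using qint_qn[of q "Suc (Suc h)"] by (simp add: add.commute)
      then show ?thesis by (simp only: length_Cons prod.lessThan_Suc_shift) (simp add: algebra_simps)
    qed
    show ?thesis unfolding X
      by (simp only: append_Cons pwr.simps Cons.IH[of "Suc h"] cond pr) (auto simp: algebra_simps)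
  next
    case Y
    show ?thesis
    proof (cases h)
      case 0
      have "\<not> (0 \<le> int h + barsum (take 1 (Y # v)))" using 0 by simp
      then have "\<not> (\<forall>i. i \<le> length (Y # v) \<longrightarrow> 0 \<le> int h + barsum (take i (Y # v)))" by force
      moreover have "pwr q r 0 (v @ [Y]) = 0" by (cases v) simp_all
      ultimately show ?thesis unfolding Y using 0 by auto
    next
      case (Suc h')
      have cond: "((\<forall>i. i \<le> length (Y # v) \<longrightarrow> 0 \<le> int h + barsum (take i (Y # v))) \<and> int h + barsum (Y # v) = 0)
         = ((\<forall>i. i \<le> length v \<longrightarrow> 0 \<le> int h' + barsum (take i v)) \<and> int h' + barsum v = 0)"
        using Suc by (simp only: length_Cons all_le_Suc) (simp add: algebra_simps)
      have pr: "(\<Prod>i<length (Y # v). qint q (1 + int h + barsum (take (Suc i) (Y # v))))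
         = qn q h * (\<Prod>i<length v. qint q (1 + int h' + barsum (take (Suc i) v)))"
      proof -
        have "qint q (1 + int h + barsum (take (Suc 0) (Y # v))) = qn q h"
          using qint_qn[of q h] by simp
        then show ?thesis using Suc by (simp only: length_Cons prod.lessThan_Suc_shift) (simp add: algebra_simps)
      qed
      show ?thesis unfolding Y Suc
        by (simp only: append_Cons pwr.simps Cons.IH[of h'] cond[unfolded Suc] pr[unfolded Suc]) (auto simp: algebra_simps)
    qed
  qed
qed

lemma catalan_cond: "catalan v = ((\<forall>i. i \<le> length v \<longrightarrow> 0 \<le> int 0 + barsum (take i v)) \<and> int 0 + barsum v = 0)"
  unfolding catalan_def
proof (intro iffI conjI allI impI)
  fix i assume h: "(\<forall>i. 1 \<le> i \<and> i < length v \<longrightarrow> 0 \<le> barsum (take i v)) \<and> barsum v = 0" "i \<le> length v"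
  show "0 \<le> int 0 + barsum (take i v)"
  proof (cases "i = 0 \<or> i = length v")
    case True then show ?thesis using h by auto
  next
    case False then show ?thesis using h by auto
  qed
qed auto

lemma xCy_len: "xCy q m u \<noteq> 0 \<Longrightarrow> length u = 2 * m + 2"
  by (auto simp: xCy_def Cn_def split: if_splits)

lemma even_len: "barsum v = 0 \<Longrightarrow> length v = 2 * count_list v X"
  using bar_count[of v] len_count[of v] by simp

lemma qint_1: "q - inverse q \<noteq> 0 \<Longrightarrow> qint q 1 = 1"
  by (simp add: qint_def power_int_minus)

lemma restr_Aser:
  assumes qq: "q - inverse q \<noteq> 0"
  shows "restr j (Aser q r) u = (if even j \<and> 2 \<le> j then r ^ (j div 2) else 0) * xCy q (j div 2 - 1) u"
proof (cases "\<exists>v. u = X # v @ [Y]")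
  case True
  then obtain v where u: "u = X # v @ [Y]" by blast
  have xc: "xCy q m u = Cn q m v" for m using u by (simp add: xCy_def)
  have A: "Aser q r u = r * (if catalan v then r ^ count_list v X *
      (\<Prod>i<length v. qint q (1 + int 0 + barsum (take (Suc i) v))) else 0)"
    using u pwr_snoc[OF qq, of r 0 v] by (simp add: catalan_cond)
  show ?thesis
  proof (cases "catalan v")
    case False
    then show ?thesis using A xc by (simp add: restr_def Cn_def)
  next
    case True
    then have b: "barsum v = 0" by (simp add: catalan_def)
    define k where "k = count_list v X"
    have lv: "length v = 2 * k" using even_len[OF b] k_def by simp
    show ?thesis
    proof (cases "length u = j")
      case False
      have "(if even j \<and> 2 \<le> j then r ^ (j div 2) else 0) * xCy q (j div 2 - 1) u = 0"
      proof (cases "even j \<and> 2 \<le> j")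
        case True
        then have "length u \<noteq> 2 * (j div 2 - 1) + 2" using False by auto
        then show ?thesis using xCy_len[of q "j div 2 - 1" u] by auto
      qed auto
      then show ?thesis using False by (simp add: restr_def)
    next
      case jl: True
      then have j: "j = 2 * k + 2" using u lv by simp
      have "Cn q k v = (\<Prod>i<Suc (2 * k). qint q (1 + barsum (take i v)))"
        using True lv by (simp add: Cn_def atLeast0AtMost lessThan_Suc_atMost)
      also have "\<dots> = (\<Prod>i<2 * k. qint q (1 + barsum (take (Suc i) v)))"
        by (simp only: prod.lessThan_Suc_shift) (simp add: qint_1[OF qq])
      finally have "Cn q k v = (\<Prod>i<2 * k. qint q (1 + barsum (take (Suc i) v)))" .
      then show ?thesis using jl j A xc True lv k_def by (simp add: restr_def)
    qed
  qed
next
  case False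
  have a0: "Aser q r u = 0"
  proof (cases u)
    case (Cons c u')
    show ?thesis
    proof (cases c)
      case X
      have "pwr q r (Suc 0) u' = 0"
      proof (rule ccontr)
        assume "pwr q r (Suc 0) u' \<noteq> 0"
        then obtain v where "u' = v @ [Y]" using pwr_snoc_ex by blast
        then show False using False Cons X by blast
      qed
      then show ?thesis using Cons X by simp
    qed (simp add: Cons)
  qed simp
  have x0: "xCy q m u = 0" for m
  proof (rule ccontr)
    assume "xCy q m u \<noteq> 0"
    then have h: "2 \<le> length u" "hd u = X" "last u = Y" by (auto simp: xCy_def split: if_splits)
    obtain a u'' where u2: "u = a # u''" using h(1) by (cases u) auto
    have "u'' \<noteq> []" using h(1) u2 by auto
    then have "u'' = butlast u'' @ [last u'']" by simp
    moreover have "last u'' = Y" using h(3) u2 \<open>u'' \<noteq> []\<close> by simp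
    ultimately have "u = X # butlast (tl u) @ [Y]" using u2 h(2) by simp
    then show False using False by blast
  qed
  show ?thesis by (simp add: restr_def a0 x0)
qed

lemma alt_len: "length (alt n) = 2 * n" by (induction n) simp_all
lemma isG_alt: "isG (alt n)" by (induction n) simp_all
lemma isG_eq: "isG u \<Longrightarrow> u = alt (length u div 2)"
  by (induction u rule: isG.induct) simp_all

lemma restr_Gser: "restr k Gser u = (if even k then 1 else 0) * ga (k div 2) u"
proof (cases "isG u")
  case True
  define n where "n = length u div 2"
  have u: "u = alt n" using isG_eq[OF True] n_def by simp
  have lu: "length u = 2 * n" using u alt_len by simp
  show ?thesis
  proof (cases "k = 2 * n")
    case True
    then show ?thesis using \<open>isG u\<close> u lu by (simp add: restr_def Gser_def ga_def basis_def)
  next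
    case False
    have "ga (k div 2) u = (0::'a)" if ek: "even k"
    proof -
      have "alt (k div 2) \<noteq> u"
      proof
        assume "alt (k div 2) = u"
        then have "length u = k" using alt_len[of "k div 2"] ek by simp
        then show False using False lu by simp
      qed
      then show ?thesis by (simp add: ga_def basis_def)
    qed
    then show ?thesis using False lu by (auto simp: restr_def)
  qed
next
  case False
  then have "ga (k div 2) u = (0::'a)" using isG_alt by (auto simp: ga_def basis_def)
  then show ?thesis using False by (simp add: restr_def Gser_def)
qed



definition cA :: "'a::field \<Rightarrow> nat \<Rightarrow> 'a" where
  "cA r j = (if even j \<and> 2 \<le> j then r ^ (j div 2) else 0)"
definition cG :: "nat \<Rightarrow> 'a::field" where
  "cG k = (if even k then 1 else 0)"

lemma restr_Aser': "q - inverse q \<noteq> 0 \<Longrightarrow> restr j (Aser q r) = (\<lambda>u. cA r j * xCy q (j div 2 - 1) u)"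
  by (rule ext) (simp add: restr_Aser cA_def)

lemma restr_Gser': "restr k Gser = (\<lambda>u. cG k * ga (k div 2) u)"
  by (rule ext) (simp add: restr_Gser cG_def)

lemma E_N:
  assumes q: "q \<noteq> 0" and qq: "q - inverse q \<noteq> 0"
  shows "(\<Sum>j\<le>2 * N. shp q (restr j Gser) (restr (2 * N - j) (Aser q (- inverse q))) w
               - shp q (restr j (Aser q (- q))) (restr (2 * N - j) Gser) w)
       = (q - inverse q) * of_nat N * ga N w"
proof (cases "length w = 2 * N")
  case True
  have "(\<Sum>j\<le>2 * N. shp q (restr j Gser) (restr (2 * N - j) (Aser q (- inverse q))) w
               - shp q (restr j (Aser q (- q))) (restr (2 * N - j) Gser) w)
      = Omega' q w - Omega q w"
    unfolding Omega_def Omega'_def using True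
    by (simp add: sum_subtractf shp_graded[of q Gser] shp_graded[of q "Aser q (- q)"])
  also have "\<dots> = (q - inverse q) * of_nat N * Gser w" using D_lemma[OF q qq] True by simp
  also have "Gser w = ga N w" using restr_Gser[of "2 * N" w] True by (simp add: restr_def)
  finally show ?thesis .
next
  case False
  have "\<And>j. j \<le> 2 * N \<Longrightarrow> shp q (restr j Gser) (restr (2 * N - j) (Aser q (- inverse q))) w = 0"
    by (rule shp_homog[where a = j and b = "2 * N - j" for j]) (auto simp: restr_def False)
  moreover have "\<And>j. j \<le> 2 * N \<Longrightarrow> shp q (restr j (Aser q (- q))) (restr (2 * N - j) Gser) w = 0"
    by (rule shp_homog[where a = j and b = "2 * N - j" for j]) (auto simp: restr_def False)
  moreover have "ga N w = (0::'a)" using False alt_len[of N] by (auto simp: ga_def basis_def)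
  ultimately show ?thesis by simp
qed

definition comm :: "'a::field \<Rightarrow> (word \<Rightarrow> 'a) \<Rightarrow> (word \<Rightarrow> 'a) \<Rightarrow> bool" where
  "comm q F H \<longleftrightarrow> (\<forall>w. shp q F H w = shp q H F w)"

lemma comm_sym: "comm q F H \<Longrightarrow> comm q H F" by (simp add: comm_def)

lemma comm_scale: "(a \<noteq> 0 \<Longrightarrow> comm q F H) \<Longrightarrow> comm q (\<lambda>u. a * F u) H"
  by (cases "a = 0") (simp_all add: comm_def shp_smult_left shp_smult_right)

lemma comm_diff: "comm q F1 H \<Longrightarrow> comm q F2 H \<Longrightarrow> comm q (\<lambda>u. F1 u - F2 u) H"
  by (simp add: comm_def shp_diff_left shp_diff_right)

lemma comm_sum: "finite S \<Longrightarrow> (\<And>i. i \<in> S \<Longrightarrow> comm q (f i) H) \<Longrightarrow> comm q (\<lambda>u. \<Sum>i\<in>S. f i u) H"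
  by (simp add: comm_def shp_sum_left shp_sum_right)

lemma comm_prod:
  assumes q: "q \<noteq> 0" and c1: "comm q F1 H" and c2: "comm q F2 H"
  shows "comm q (shp q F1 F2) H"
  unfolding comm_def
proof
  fix w
  have e1: "shp q F2 H = shp q H F2" using c2 by (auto simp: comm_def)
  have e2: "shp q F1 H = shp q H F1" using c1 by (auto simp: comm_def)
  have "shp q (shp q F1 F2) H w = shp q F1 (shp q F2 H) w" by (rule shp_assoc[OF q])
  also have "\<dots> = shp q F1 (shp q H F2) w" by (simp only: e1)
  also have "\<dots> = shp q (shp q F1 H) F2 w" by (rule shp_assoc[OF q, symmetric])
  also have "\<dots> = shp q (shp q H F1) F2 w" by (simp only: e2)
  also have "\<dots> = shp q H (shp q F1 F2) w" by (rule shp_assoc[OF q])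
  finally show "shp q (shp q F1 F2) H w = shp q H (shp q F1 F2) w" .
qed

lemma comm_cong: "F = G \<Longrightarrow> comm q G H \<Longrightarrow> comm q F H" by simp

lemma step:
  assumes q: "q \<noteq> 0" and qq: "q - inverse q \<noteq> 0" and N: "1 \<le> N"
    and c0: "(- inverse q) ^ N - (- q) ^ N \<noteq> 0"
    and hG: "\<And>k. comm q (ga k) H" and hA: "\<And>m. m < N - 1 \<Longrightarrow> comm q (xCy q m) H"
  shows "comm q (xCy q (N - 1)) H"
proof -
  define U where "U j = (\<lambda>w. shp q (restr j Gser) (restr (2 * N - j) (Aser q (- inverse q))) w
               - shp q (restr j (Aser q (- q))) (restr (2 * N - j) Gser) w)" for j
  have sumU: "(\<lambda>w. \<Sum>j\<le>2 * N. U j w) = (\<lambda>w. (q - inverse q) * of_nat N * ga N w)"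
    by (rule ext) (simp add: U_def E_N[OF q qq])
  have U0: "U 0 = (\<lambda>w. (- inverse q) ^ N * xCy q (N - 1) w)"
    using N by (intro ext) (simp add: U_def restr_Aser'[OF qq] restr_Gser' cA_def cG_def ga0 shp_smult_left shp_smult_right)
  have U2N: "U (2 * N) = (\<lambda>w. - ((- q) ^ N * xCy q (N - 1) w))"
    using N by (intro ext) (simp add: U_def restr_Aser'[OF qq] restr_Gser' cA_def cG_def ga0 shp_smult_left shp_smult_right)
  have Umid: "comm q (U j) H" if j: "1 \<le> j" "j < 2 * N" for j
  proof -
    have t1: "comm q (\<lambda>w. cG j * cA (- inverse q) (2 * N - j) * shp q (ga (j div 2)) (xCy q ((2 * N - j) div 2 - 1)) w) H"
    proof (rule comm_scale)
      assume "cG j * cA (- inverse q) (2 * N - j) \<noteq> (0::'a)"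
      then have "even (2 * N - j)" "2 \<le> 2 * N - j" by (auto simp: cA_def split: if_splits)
      then have "(2 * N - j) div 2 - 1 < N - 1" using j by auto
      then show "comm q (shp q (ga (j div 2)) (xCy q ((2 * N - j) div 2 - 1))) H"
        by (intro comm_prod[OF q] hG hA)
    qed
    have t2: "comm q (\<lambda>w. cA (- q) j * cG (2 * N - j) * shp q (xCy q (j div 2 - 1)) (ga ((2 * N - j) div 2)) w) H"
    proof (rule comm_scale)
      assume "cA (- q) j * cG (2 * N - j) \<noteq> (0::'a)"
      then have "even j" "2 \<le> j" by (auto simp: cA_def split: if_splits)
      then have "j div 2 - 1 < N - 1" using j by auto
      then show "comm q (shp q (xCy q (j div 2 - 1)) (ga ((2 * N - j) div 2))) H"
        by (intro comm_prod[OF q] hG hA)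
    qed
    have "U j = (\<lambda>w. cG j * cA (- inverse q) (2 * N - j) * shp q (ga (j div 2)) (xCy q ((2 * N - j) div 2 - 1)) w
       - cA (- q) j * cG (2 * N - j) * shp q (xCy q (j div 2 - 1)) (ga ((2 * N - j) div 2)) w)"
      by (rule ext) (simp add: U_def restr_Aser'[OF qq] restr_Gser' shp_smult_left shp_smult_right mult.assoc)
    then show ?thesis using comm_diff[OF t1 t2] by simp
  qed
  have splt: "{..2 * N} = insert 0 (insert (2 * N) {1..<2 * N})" using N by auto
  have "(\<lambda>w. ((- inverse q) ^ N - (- q) ^ N) * xCy q (N - 1) w)
      = (\<lambda>w. (\<Sum>j\<le>2 * N. U j w) - (\<Sum>j\<in>{1..<2 * N}. U j w))"
  proof (rule ext)
    fix w
    have "(\<Sum>j\<le>2 * N. U j w) = U 0 w + (U (2 * N) w + (\<Sum>j\<in>{1..<2 * N}. U j w))"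
      unfolding splt using N by (simp add: sum.insert)
    then show "((- inverse q) ^ N - (- q) ^ N) * xCy q (N - 1) w
      = (\<Sum>j\<le>2 * N. U j w) - (\<Sum>j\<in>{1..<2 * N}. U j w)"
      by (simp only: U0 U2N) (simp add: algebra_simps)
  qed
  moreover have "comm q (\<lambda>w. (\<Sum>j\<le>2 * N. U j w) - (\<Sum>j\<in>{1..<2 * N}. U j w)) H"
  proof (rule comm_diff)
    show "comm q (\<lambda>w. \<Sum>j\<le>2 * N. U j w) H"
      unfolding sumU by (rule comm_scale) (rule hG)
    show "comm q (\<lambda>w. \<Sum>j\<in>{1..<2 * N}. U j w) H"
      by (rule comm_sum) (auto intro: Umid)
  qed
  ultimately have c: "comm q (\<lambda>w. ((- inverse q) ^ N - (- q) ^ N) * xCy q (N - 1) w) H" by simp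
  have eq: "xCy q (N - 1) = (\<lambda>w. inverse ((- inverse q) ^ N - (- q) ^ N) * (((- inverse q) ^ N - (- q) ^ N) * xCy q (N - 1) w))"
    using c0 by (intro ext) simp
  have c2: "comm q (\<lambda>w. inverse ((- inverse q) ^ N - (- q) ^ N) * (((- inverse q) ^ N - (- q) ^ N) * xCy q (N - 1) w)) H"
    by (rule comm_scale) (rule c)
  show ?thesis by (subst eq) (rule c2)
qed

lemma finite_len: "finite {u::word. length u = n}"
proof -
  have "(UNIV::letter set) = {X, Y}" using letter.exhaust by auto
  then have "finite (UNIV::letter set)" by (metis finite.emptyI finite.insertI)
  from finite_lists_length_eq[OF this, of n] show ?thesis by simp
qed

lemma xCy_fin: "finite {u. xCy q n u \<noteq> 0}"
  by (rule finite_subset[OF _ finite_len[of "2 * n + 2"]]) (auto dest: xCy_len)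

theorem corollary8p4:
  fixes q :: "'a::field_char_0" and n m :: nat
  assumes "q \<noteq> 0" and "\<forall>k::nat. k > 0 \<longrightarrow> q ^ k \<noteq> 1"
  shows "qshuffle q (xCy q n) (xCy q m) = qshuffle q (xCy q m) (xCy q n)"
proof -
  note q = assms(1)
  have qq: "q - inverse q \<noteq> 0"
  proof
    assume "q - inverse q = 0"
    then have "q * q = 1" using q by (simp add: field_simps)
    then have "q ^ 2 = 1" by (simp add: power2_eq_square)
    then show False using assms(2) by auto
  qed
  have c0: "(- inverse q) ^ N - (- q) ^ N \<noteq> 0" if N: "1 \<le> N" for N
  proof
    assume "(- inverse q) ^ N - (- q) ^ N = 0"
    then have "(-1) ^ N * inverse q ^ N = (-1) ^ N * q ^ N"
      by (simp add: power_minus[of "inverse q"] power_minus[of q])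
    then have e: "inverse q ^ N = q ^ N" by simp
    have "q ^ (2 * N) = q ^ N * q ^ N" by (simp add: mult_2 power_add)
    also have "\<dots> = inverse q ^ N * q ^ N" by (simp add: e)
    also have "\<dots> = 1" by (rule pq_pow[OF q])
    finally show False using assms(2) N by (metis mult_pos_pos zero_less_numeral less_le_trans zero_less_one)
  qed
  have hG: "comm q (ga k') (ga k)" for k' k
    using G_comm[OF q, of k' k] by (simp add: comm_def fun_eq_iff)
  have S1: "comm q (xCy q n') (ga k)" for n' k
  proof (induction n' arbitrary: k rule: less_induct)
    case (less n')
    have "comm q (xCy q (Suc n' - 1)) (ga k)"
    proof (rule step[OF q qq _ c0[of "Suc n'"]])
      show "\<And>k'. comm q (ga k') (ga k)" by (rule hG)
      show "\<And>m'. m' < Suc n' - 1 \<Longrightarrow> comm q (xCy q m') (ga k)" using less by simp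
    qed simp_all
    then show ?case by simp
  qed
  have S2: "comm q (xCy q n') (xCy q m)" for n'
  proof (induction n' rule: less_induct)
    case (less n')
    have "comm q (xCy q (Suc n' - 1)) (xCy q m)"
    proof (rule step[OF q qq _ c0[of "Suc n'"]])
      show "\<And>k'. comm q (ga k') (xCy q m)" by (rule comm_sym[OF S1])
      show "\<And>m'. m' < Suc n' - 1 \<Longrightarrow> comm q (xCy q m') (xCy q m)" using less by simp
    qed simp_all
    then show ?case by simp
  qed
  show ?thesis
  proof (rule ext)
    fix w
    show "qshuffle q (xCy q n) (xCy q m) w = qshuffle q (xCy q m) (xCy q n) w"
      using S2[of n] by (simp add: qshuffle_shp[OF xCy_fin xCy_fin] comm_def)
  qed
qed

end
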